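(* Let $(x_n,y_n)_{n\in\mathbb Z}$ and $(x'_n,y'_n)_{n\in\mathbb Z}$ be two elliptic sequences in general position on the same biquadratic polynomial $F$, let $A=y'_{-1}$, and let $f$ be a function defined on $\{x_n:n\ge0\}$ satisfying $(\mathcal Df)(y_n)=\dfrac{Y_2(y_n)}{y_n-A}$ for all $n\ge0$. Assume $C_{m,0,0}\ne0$ for all $m\ge1$. Put $c_0=f(x_0)$ and $c_m=\dfrac{y_{m-1}-y'_{m-1}}{C_{m,0,0}}$ for $m\ge1$. Then for every $N\ge0$ the partial sum $$S_N(x)=\sum_{m=0}^Nc_m\frac{(x-x_0)\cdots(x-x_{m-1})}{(x-x'_0)\cdots(x-x'_{m-1})}$$ satisfies $S_N(x_n)=f(x_n)$ for $n=0,1,\dots,N$; i.e. $f(x)=\sum_{m\ge0}c_m\frac{(x-x_0)\cdots(x-x_{m-1})}{(x-x'_0)\cdots(x-x'_{m-1})}$ as an interpolatory expansion.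
   Context: $F(x,y)=\sum_{i,j=0}^2c_{i,j}x^iy^j=Y_0(y)+xY_1(y)+x^2Y_2(y)=X_0(x)+yX_1(x)+y^2X_2(x)$. An elliptic sequence on $F$ is $(x_n,y_n)_{n\in\mathbb Z}$ such that for every $n$, $x_n,x_{n+1}$ are the two roots of $F(\cdot,y_n)$ and $y_{n-1},y_n$ the two roots of $F(x_n,\cdot)$; general position means all $x_n,x'_n$ distinct, all $y_n,y'_n$ distinct, $X_2,Y_2$ nonvanishing there. $(\mathcal Df)(y_n)=\frac{f(x_{n+1})-f(x_n)}{x_{n+1}-x_n}$; for rational $f$, $(\mathcal Df)(y)=\frac{f(x^+)-f(x^-)}{x^+-x^-}$ with $x^\pm$ the roots of $F(x,y)=0$. $C_{m,0,0}$ is the constant such that $\mathcal D\Big[\frac{(x-x_0)\cdots(x-x_{m-1})}{(x-x'_0)\cdots(x-x'_{m-1})}\Big](y)=C_{m,0,0}Y_2(y)\frac{(y-y_0)\cdots(y-y_{m-2})}{(y-y'_{-1})(y-y'_0)\cdots(y-y'_{m-1})}$ (such a constant exists). Empty products equal $1$. *)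

theory Defs
  imports Complex_Main
begin

definition bq :: "(nat \<Rightarrow> nat \<Rightarrow> complex) \<Rightarrow> complex \<Rightarrow> complex \<Rightarrow> complex" where
  "bq c x y = (\<Sum>i\<le>2. \<Sum>j\<le>2. c i j * x ^ i * y ^ j)"

definition bqY2 :: "(nat \<Rightarrow> nat \<Rightarrow> complex) \<Rightarrow> complex \<Rightarrow> complex" where
  "bqY2 c y = (\<Sum>j\<le>2. c 2 j * y ^ j)"

definition bqX2 :: "(nat \<Rightarrow> nat \<Rightarrow> complex) \<Rightarrow> complex \<Rightarrow> complex" where
  "bqX2 c x = (\<Sum>i\<le>2. c i 2 * x ^ i)"

definition elliptic_seq ::
  "(nat \<Rightarrow> nat \<Rightarrow> complex) \<Rightarrow> (int \<Rightarrow> complex) \<Rightarrow> (int \<Rightarrow> complex) \<Rightarrow> bool" where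
  "elliptic_seq c xs ys \<longleftrightarrow>
     (\<forall>n x. bq c x (ys n) = bqY2 c (ys n) * (x - xs n) * (x - xs (n + 1))) \<and>
     (\<forall>n y. bq c (xs n) y = bqX2 c (xs n) * (y - ys (n - 1)) * (y - ys n))"

definition general_position ::
  "(nat \<Rightarrow> nat \<Rightarrow> complex) \<Rightarrow> (int \<Rightarrow> complex) \<Rightarrow> (int \<Rightarrow> complex)
     \<Rightarrow> (int \<Rightarrow> complex) \<Rightarrow> (int \<Rightarrow> complex) \<Rightarrow> bool" where
  "general_position c xs ys xs' ys' \<longleftrightarrow>
     inj xs \<and> inj xs' \<and> (\<forall>n m. xs n \<noteq> xs' m) \<and>
     inj ys \<and> inj ys' \<and> (\<forall>n m. ys n \<noteq> ys' m) \<and>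
     (\<forall>n. bqX2 c (xs n) \<noteq> 0 \<and> bqX2 c (xs' n) \<noteq> 0 \<and>
          bqY2 c (ys n) \<noteq> 0 \<and> bqY2 c (ys' n) \<noteq> 0)"

definition ratb :: "(int \<Rightarrow> complex) \<Rightarrow> (int \<Rightarrow> complex) \<Rightarrow> nat \<Rightarrow> complex \<Rightarrow> complex" where
  "ratb xs xs' m x = (\<Prod>k<m. x - xs (int k)) / (\<Prod>k<m. x - xs' (int k))"

text \<open>The constant C_{m,0,0}: the constant c such that, as rational functions in y,
  D[ratb m](y) = c * Y_2(y) * (y-y_0)...(y-y_{m-2}) / ((y-y'_{-1})(y-y'_0)...(y-y'_{m-1})),
  where (D g)(y) = (g(x+) - g(x-))/(x+ - x-) with x+, x- the two roots of F(.,y).\<close>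
definition C_const ::
  "(nat \<Rightarrow> nat \<Rightarrow> complex) \<Rightarrow> (int \<Rightarrow> complex) \<Rightarrow> (int \<Rightarrow> complex)
     \<Rightarrow> (int \<Rightarrow> complex) \<Rightarrow> (int \<Rightarrow> complex) \<Rightarrow> nat \<Rightarrow> complex" where
  "C_const c xs ys xs' ys' m =
     (THE C. \<forall>y xp xm.
        bqY2 c y \<noteq> 0 \<longrightarrow> xp \<noteq> xm \<longrightarrow>
        (\<forall>x. bq c x y = bqY2 c y * (x - xp) * (x - xm)) \<longrightarrow>
        (\<forall>k<m. xp \<noteq> xs' (int k) \<and> xm \<noteq> xs' (int k)) \<longrightarrow>
        (\<forall>k\<in>{-1..int m - 1}. y \<noteq> ys' k) \<longrightarrow>
        (ratb xs xs' m xp - ratb xs xs' m xm) / (xp - xm) =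
          C * bqY2 c y * (\<Prod>k\<in>{0..int m - 2}. y - ys k)
            / (\<Prod>k\<in>{-1..int m - 1}. y - ys' k))"

end

theory Submission imports Defs "HOL-Computational_Algebra.Polynomial" begin

definition Y0 :: "(nat \<Rightarrow> nat \<Rightarrow> complex) \<Rightarrow> complex \<Rightarrow> complex" where
  "Y0 c y = (\<Sum>j\<le>2. c 0 j * y ^ j)"
definition Y1 :: "(nat \<Rightarrow> nat \<Rightarrow> complex) \<Rightarrow> complex \<Rightarrow> complex" where
  "Y1 c y = (\<Sum>j\<le>2. c 1 j * y ^ j)"

lemma bq_expand: "bq c x y = Y0 c y + Y1 c y * x + bqY2 c y * x^2"
  by (simp add: bq_def Y0_def Y1_def bqY2_def numeral_2_eq_2 algebra_simps)

definition Y0p where "Y0p c = [:c 0 0, c 0 1, c 0 2:]"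
definition Y1p where "Y1p c = [:c 1 0, c 1 1, c 1 2:]"
definition Y2p where "Y2p c = [:c 2 0, c 2 1, c 2 2:]"

lemma poly_Y0p[simp]: "poly (Y0p c) y = Y0 c y"
  by (simp add: Y0p_def Y0_def numeral_2_eq_2 algebra_simps)
lemma poly_Y1p[simp]: "poly (Y1p c) y = Y1 c y"
  by (simp add: Y1p_def Y1_def numeral_2_eq_2 algebra_simps)
lemma poly_Y2p[simp]: "poly (Y2p c) y = bqY2 c y"
  by (simp add: Y2p_def bqY2_def numeral_2_eq_2 algebra_simps)
lemma deg_Y0p: "degree (Y0p c) \<le> 2" by (simp add: Y0p_def degree_pCons_eq_if)
lemma deg_Y1p: "degree (Y1p c) \<le> 2" by (simp add: Y1p_def degree_pCons_eq_if)
lemma deg_Y2p: "degree (Y2p c) \<le> 2" by (simp add: Y2p_def degree_pCons_eq_if)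

lemma fac_coeffs:
  assumes "\<forall>x. bq c x y = bqY2 c y * (x - a) * (x - b)"
  shows "Y1 c y = - bqY2 c y * (a + b)" "Y0 c y = bqY2 c y * a * b"
proof -
  have e0: "Y0 c y = bqY2 c y * a * b" using spec[OF assms, of 0] by (simp add: bq_expand)
  have e1: "Y0 c y + Y1 c y + bqY2 c y = bqY2 c y * (1 - a) * (1 - b)"
    using spec[OF assms, of 1] by (simp add: bq_expand)
  have e2: "Y0 c y - Y1 c y + bqY2 c y = bqY2 c y * (-1 - a) * (-1 - b)"
    using spec[OF assms, of "-1"] by (simp add: bq_expand)
  have "2 * Y1 c y = 2 * (- bqY2 c y * (a + b))"
  proof -
    have "2 * Y1 c y = (Y0 c y + Y1 c y + bqY2 c y) - (Y0 c y - Y1 c y + bqY2 c y)" by simp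
    also have "\<dots> = bqY2 c y * (1 - a) * (1 - b) - bqY2 c y * (-1 - a) * (-1 - b)" using e1 e2 by simp
    also have "\<dots> = 2 * (- bqY2 c y * (a + b))" by (simp add: algebra_simps)
    finally show ?thesis .
  qed
  then show "Y1 c y = - bqY2 c y * (a + b)" by simp
  show "Y0 c y = bqY2 c y * a * b" by (rule e0)
qed

fun Hp :: "(nat \<Rightarrow> nat \<Rightarrow> complex) \<Rightarrow> nat \<Rightarrow> complex poly" where
  "Hp c 0 = 1"
| "Hp c (Suc 0) = - Y1p c"
| "Hp c (Suc (Suc k)) = - Y1p c * Hp c (Suc k) - Y0p c * Y2p c * Hp c k"

lemma deg_Hp: "degree (Hp c k) \<le> 2 * k"
proof (induction c k rule: Hp.induct)
  case (3 c k)
  have a: "degree (- Y1p c * Hp c (Suc k)) \<le> 2 * Suc (Suc k)"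
    using degree_mult_le[of "- Y1p c" "Hp c (Suc k)"] deg_Y1p[of c] 3(1) by simp
  have b: "degree (Y0p c * Y2p c * Hp c k) \<le> 2 * Suc (Suc k)"
    using degree_mult_le[of "Y0p c * Y2p c" "Hp c k"] degree_mult_le[of "Y0p c" "Y2p c"]
      deg_Y0p[of c] deg_Y2p[of c] 3(2) by simp
  show ?case using degree_diff_le[OF a b] by simp
qed (auto simp: deg_Y1p)

lemma Hp_eval:
  assumes "Y1 c y = - bqY2 c y * (a + b)" "Y0 c y = bqY2 c y * a * b"
  shows "(a - b) * poly (Hp c k) y = bqY2 c y ^ k * (a ^ (k+1) - b ^ (k+1))"
proof (induction k rule: less_induct)
  case (less k)
  let ?Y = "bqY2 c y"
  show ?case
  proof (cases k)
    case 0 then show ?thesis by simp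
  next
    case (Suc k1)
    show ?thesis
    proof (cases k1)
      case 0
      then have "(a - b) * poly (Hp c k) y = (a - b) * (?Y * (a + b))" using Suc by (simp add: assms(1))
      then show ?thesis using Suc 0 by (simp add: algebra_simps power2_eq_square)
    next
      case (Suc j)
      have IH1: "(a - b) * poly (Hp c (Suc j)) y = ?Y ^ (Suc j) * (a ^ (Suc j+1) - b ^ (Suc j+1))"
        using less[of "Suc j"] \<open>k = Suc k1\<close> Suc by simp
      have IH0: "(a - b) * poly (Hp c j) y = ?Y ^ j * (a ^ (j+1) - b ^ (j+1))"
        using less[of j] \<open>k = Suc k1\<close> Suc by simp
      have "(a - b) * poly (Hp c k) y = - Y1 c y * ((a - b) * poly (Hp c (Suc j)) y)
              - Y0 c y * ?Y * ((a - b) * poly (Hp c j) y)"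
        using \<open>k = Suc k1\<close> Suc by (simp add: algebra_simps)
      also have "\<dots> = ?Y * (a + b) * (?Y ^ (Suc j) * (a ^ (Suc j+1) - b ^ (Suc j+1)))
              - ?Y * a * b * ?Y * (?Y ^ j * (a ^ (j+1) - b ^ (j+1)))"
        unfolding IH1 IH0 assms by simp
      also have "\<dots> = ?Y ^ k * (a ^ (k + 1) - b ^ (k + 1))"
        using \<open>k = Suc k1\<close> Suc by (simp add: algebra_simps)
      finally show ?thesis .
    qed
  qed
qed


lemma T_eval_lt:
  assumes "Y1 c y = - bqY2 c y * (a + b)" "Y0 c y = bqY2 c y * a * b"
    and "j < i" "i \<le> m"
  shows "(a - b) * poly (Y0p c ^ j * Y2p c ^ (m - i) * Hp c (i - j - 1)) y
         = bqY2 c y ^ (m - 1) * (a ^ i * b ^ j - a ^ j * b ^ i)"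
proof -
  obtain d e where i: "i = j + d + 1" and m: "m = i + e"
    using assms(3,4) by (metis add.commute le_Suc_ex less_imp_Suc_add Suc_eq_plus1)
  let ?Y = "bqY2 c y"
  have "(a - b) * poly (Y0p c ^ j * Y2p c ^ (m - i) * Hp c (i - j - 1)) y
      = Y0 c y ^ j * ?Y ^ e * ((a - b) * poly (Hp c d) y)"
    using i m by (simp add: algebra_simps)
  also have "\<dots> = (?Y * a * b) ^ j * ?Y ^ e * (?Y ^ d * (a ^ (d+1) - b ^ (d+1)))"
    using Hp_eval[OF assms(1,2), of d] assms(2) by simp
  also have "\<dots> = ?Y ^ (m - 1) * (a ^ i * b ^ j - a ^ j * b ^ i)"
    using i m by (simp add: algebra_simps power_add power_mult_distrib)
  finally show ?thesis .
qed

definition Tp :: "(nat \<Rightarrow> nat \<Rightarrow> complex) \<Rightarrow> nat \<Rightarrow> nat \<Rightarrow> nat \<Rightarrow> complex poly" where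
  "Tp c m i j = (if j < i then Y0p c ^ j * Y2p c ^ (m - i) * Hp c (i - j - 1)
     else if i < j then - (Y0p c ^ i * Y2p c ^ (m - j) * Hp c (j - i - 1)) else 0)"

lemma Tp_eval:
  assumes "Y1 c y = - bqY2 c y * (a + b)" "Y0 c y = bqY2 c y * a * b"
    and "i \<le> m" "j \<le> m"
  shows "(a - b) * poly (Tp c m i j) y = bqY2 c y ^ (m - 1) * (a ^ i * b ^ j - a ^ j * b ^ i)"
proof -
  consider "j < i" | "i < j" | "i = j" by linarith
  then show ?thesis
  proof cases
    case 1 then show ?thesis using T_eval_lt[OF assms(1,2) 1 assms(3)] by (simp add: Tp_def)
  next
    case 2 then show ?thesis using T_eval_lt[OF assms(1,2) 2 assms(4)] 
      by (simp add: Tp_def algebra_simps)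
  qed (simp add: Tp_def)
qed

lemma T_deg_lt:
  assumes "j < i" "i \<le> m"
  shows "degree (Y0p c ^ j * Y2p c ^ (m - i) * Hp c (i - j - 1)) \<le> 2 * m - 2"
proof -
  have "degree (Y0p c ^ j * Y2p c ^ (m - i) * Hp c (i - j - 1))
     \<le> degree (Y0p c ^ j) + degree (Y2p c ^ (m - i)) + degree (Hp c (i - j - 1))"
    by (meson add_le_mono degree_mult_le le_refl order_trans)
  also have "\<dots> \<le> 2 * j + 2 * (m - i) + 2 * (i - j - 1)"
  proof (intro add_mono)
    show "degree (Y0p c ^ j) \<le> 2 * j"
      using degree_power_le[of "Y0p c" j] deg_Y0p[of c] by (metis mult.commute mult_le_mono1 order_trans)
    show "degree (Y2p c ^ (m - i)) \<le> 2 * (m - i)"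
      using degree_power_le[of "Y2p c" "m - i"] deg_Y2p[of c] by (metis mult.commute mult_le_mono1 order_trans)
  qed (rule deg_Hp)
  also have "\<dots> = 2 * m - 2" using assms by simp
  finally show ?thesis .
qed

lemma Tp_deg: "i \<le> m \<Longrightarrow> j \<le> m \<Longrightarrow> degree (Tp c m i j) \<le> 2 * m - 2"
  using T_deg_lt[of j i m c] T_deg_lt[of i j m c] by (auto simp: Tp_def)

definition Pp :: "(int \<Rightarrow> complex) \<Rightarrow> nat \<Rightarrow> complex poly" where
  "Pp xs m = (\<Prod>k<m. [:- xs (int k), 1:])"

lemma poly_Pp: "poly (Pp xs m) a = (\<Prod>k<m. a - xs (int k))"
  by (simp add: Pp_def poly_prod)

lemma deg_Pp: "degree (Pp xs m) \<le> m"
proof -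
  have "degree (Pp xs m) \<le> (\<Sum>k<m. degree [:- xs (int k), 1:])"
    unfolding Pp_def using degree_prod_sum_le[of "{..<m}" "\<lambda>k. [:- xs (int k), 1:]"] by (simp add: o_def)
  then show ?thesis by simp
qed

lemma poly_sum_le:
  fixes p :: "complex poly"
  assumes "degree p \<le> n"
  shows "poly p x = (\<Sum>i\<le>n. coeff p i * x ^ i)"
proof -
  have "poly p x = (\<Sum>i\<le>degree p. coeff p i * x ^ i)" by (rule poly_altdef)
  also have "\<dots> = (\<Sum>i\<le>n. coeff p i * x ^ i)"
    by (rule sum.mono_neutral_left) (use assms in \<open>auto simp: coeff_eq_0\<close>)
  finally show ?thesis .
qed

definition Gp where
  "Gp c xs xs' m = (\<Sum>i\<le>m. \<Sum>j\<le>m. smult (coeff (Pp xs m) i * coeff (Pp xs' m) j) (Tp c m i j))"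

lemma Gp_deg: "degree (Gp c xs xs' m) \<le> 2 * m - 2"
  unfolding Gp_def
  by (intro degree_sum_le order_trans[OF degree_smult_le] Tp_deg) auto

lemma Gp_eval:
  assumes "Y1 c y = - bqY2 c y * (a + b)" "Y0 c y = bqY2 c y * a * b"
  shows "(a - b) * poly (Gp c xs xs' m) y = bqY2 c y ^ (m - 1) *
     (poly (Pp xs m) a * poly (Pp xs' m) b - poly (Pp xs m) b * poly (Pp xs' m) a)"
proof -
  let ?p = "coeff (Pp xs m)" and ?q = "coeff (Pp xs' m)"
  have "(a - b) * poly (Gp c xs xs' m) y = (\<Sum>i\<le>m. \<Sum>j\<le>m. ?p i * ?q j * ((a - b) * poly (Tp c m i j) y))"
    by (simp add: Gp_def poly_sum sum_distrib_left algebra_simps)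
  also have "\<dots> = (\<Sum>i\<le>m. \<Sum>j\<le>m. ?p i * ?q j * (bqY2 c y ^ (m - 1) * (a ^ i * b ^ j - a ^ j * b ^ i)))"
    by (intro sum.cong refl) (simp add: Tp_eval[OF assms])
  also have "\<dots> = bqY2 c y ^ (m - 1) * ((\<Sum>i\<le>m. ?p i * a ^ i) * (\<Sum>j\<le>m. ?q j * b ^ j)
        - (\<Sum>i\<le>m. ?p i * b ^ i) * (\<Sum>j\<le>m. ?q j * a ^ j))"
  proof -
    have e1: "(\<Sum>i\<le>m. ?p i * a ^ i) * (\<Sum>j\<le>m. ?q j * b ^ j) = (\<Sum>i\<le>m. \<Sum>j\<le>m. ?p i * ?q j * (a ^ i * b ^ j))"
      by (simp add: sum_product algebra_simps)
    have "(\<Sum>i\<le>m. ?p i * b ^ i) * (\<Sum>j\<le>m. ?q j * a ^ j) = (\<Sum>i\<le>m. \<Sum>j\<le>m. ?p i * ?q j * (a ^ j * b ^ i))"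
      by (simp add: sum_product algebra_simps, rule sum.swap)
    then show ?thesis unfolding e1 by (simp add: sum_distrib_left algebra_simps sum_subtractf)
  qed
  also have "\<dots> = bqY2 c y ^ (m - 1) *
     (poly (Pp xs m) a * poly (Pp xs' m) b - poly (Pp xs m) b * poly (Pp xs' m) a)"
    using poly_sum_le[OF deg_Pp[of xs m]] poly_sum_le[OF deg_Pp[of xs' m]] by simp
  finally show ?thesis .
qed


lemma roots_factor:
  fixes Z :: "complex set"
  assumes "finite Z"
  shows "degree p \<le> card Z \<Longrightarrow> (\<forall>z\<in>Z. poly p z = 0) \<Longrightarrow> \<exists>L. \<forall>x. poly p x = L * (\<Prod>z\<in>Z. x - z)"
  using assms
proof (induction Z arbitrary: p rule: finite_induct)
  case empty
  then have "degree p = 0" by simp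
  then show ?case by (intro exI[of _ "coeff p 0"] allI) (simp add: poly_altdef)
next
  case (insert z Z p)
  have "poly p z = 0" using insert by simp
  then obtain q where pq: "p = [:- z, 1:] * q" using poly_eq_0_iff_dvd by (metis dvdE)
  show ?case
  proof (cases "q = 0")
    case True then show ?thesis using pq by (intro exI[of _ 0]) simp
  next
    case False
    have "degree p = degree q + 1" using pq False degree_mult_eq[of "[:- z, 1:]" q] by simp
    then have dq: "degree q \<le> card Z" using insert by simp
    have "\<forall>w\<in>Z. poly q w = 0"
    proof
      fix w assume "w \<in> Z"
      then have "w \<noteq> z" "poly p w = 0" using insert by auto
      then show "poly q w = 0" using pq by simp
    qed
    then obtain L where L: "\<forall>x. poly q x = L * (\<Prod>z\<in>Z. x - z)" using insert.IH dq by blast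
    show ?thesis
    proof (intro exI[of _ L] allI)
      fix x
      have "poly p x = (x - z) * poly q x" unfolding pq by (simp add: algebra_simps)
      then show "poly p x = L * (\<Prod>z\<in>insert z Z. x - z)" using L insert(1,2) by simp
    qed
  qed
qed

lemma prod_int_interval: "(\<Prod>k\<in>{0..int n - 1}. g k) = (\<Prod>k<n. g (int k))"
proof -
  have e: "{0..int n - 1} = int ` {..<n}"
    by (auto simp: image_iff intro!: bexI[of _ "nat _"])
  show ?thesis unfolding e by (subst prod.reindex) (auto simp: inj_on_def)
qed

lemma prod_int1: "m \<ge> 1 \<Longrightarrow> (\<Prod>k\<in>{0..int m - 2}. g k) = (\<Prod>k<m - 1. g (int k))"
  using prod_int_interval[where n="m - 1" and g=g] by (simp add: of_nat_diff algebra_simps)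

lemma prod_int2: "(\<Prod>k\<in>{-1..int m - 1}. g k) = g (-1) * (\<Prod>k<m. g (int k))"
proof -
  have "{-1..int m - 1} = insert (-1) {0..int m - 1}" by auto
  then show ?thesis by (simp add: prod_int_interval)
qed


lemma aux_frac:
  fixes Qa Qb d W Pa Pb :: complex
  shows "Qa \<noteq> 0 \<Longrightarrow> Qb \<noteq> 0 \<Longrightarrow> d \<noteq> 0 \<Longrightarrow> W \<noteq> 0 \<Longrightarrow>
     (Pa / Qa - Pb / Qb) / d = (W * (Pa * Qb - Pb * Qa) / d) / (W * Qa * Qb)"
  by (simp add: field_simps)

definition PropC ::
  "(nat \<Rightarrow> nat \<Rightarrow> complex) \<Rightarrow> (int \<Rightarrow> complex) \<Rightarrow> (int \<Rightarrow> complex)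
     \<Rightarrow> (int \<Rightarrow> complex) \<Rightarrow> (int \<Rightarrow> complex) \<Rightarrow> nat \<Rightarrow> complex \<Rightarrow> bool" where
  "PropC c xs ys xs' ys' m C \<longleftrightarrow> (\<forall>y xp xm.
        bqY2 c y \<noteq> 0 \<longrightarrow> xp \<noteq> xm \<longrightarrow>
        (\<forall>x. bq c x y = bqY2 c y * (x - xp) * (x - xm)) \<longrightarrow>
        (\<forall>k<m. xp \<noteq> xs' (int k) \<and> xm \<noteq> xs' (int k)) \<longrightarrow>
        (\<forall>k\<in>{-1..int m - 1}. y \<noteq> ys' k) \<longrightarrow>
        (ratb xs xs' m xp - ratb xs xs' m xm) / (xp - xm) =
          C * bqY2 c y * (\<Prod>k\<in>{0..int m - 2}. y - ys k)
            / (\<Prod>k\<in>{-1..int m - 1}. y - ys' k))"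

lemma C_const_alt: "C_const c xs ys xs' ys' m = (THE C. PropC c xs ys xs' ys' m C)"
  unfolding C_const_def PropC_def by simp

context
  fixes c :: "nat \<Rightarrow> nat \<Rightarrow> complex" and xs ys xs' ys' :: "int \<Rightarrow> complex"
  assumes ell: "elliptic_seq c xs ys" and ell': "elliptic_seq c xs' ys'"
    and gp: "general_position c xs ys xs' ys'"
begin

lemma facy: "bq c x (ys n) = bqY2 c (ys n) * (x - xs n) * (x - xs (n + 1))"
  using ell unfolding elliptic_seq_def by blast
lemma facy': "bq c x (ys' n) = bqY2 c (ys' n) * (x - xs' n) * (x - xs' (n + 1))"
  using ell' unfolding elliptic_seq_def by blast
lemma facx': "bq c (xs' n) y = bqX2 c (xs' n) * (y - ys' (n - 1)) * (y - ys' n)"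
  using ell' unfolding elliptic_seq_def by blast

lemma gp_facts:
  "inj xs" "inj xs'" "xs n \<noteq> xs' k" "inj ys" "inj ys'" "ys n \<noteq> ys' k"
  "bqX2 c (xs' n) \<noteq> 0" "bqY2 c (ys n) \<noteq> 0" "bqY2 c (ys' n) \<noteq> 0"
  using gp unfolding general_position_def by blast+

lemma Gp_root:
  assumes fac: "\<forall>x. bq c x y = bqY2 c y * (x - a) * (x - b)" and ab: "a \<noteq> b"
    and z: "(poly (Pp xs m) a = 0 \<and> poly (Pp xs m) b = 0) \<or> (poly (Pp xs' m) a = 0 \<and> poly (Pp xs' m) b = 0)"
  shows "poly (Gp c xs xs' m) y = 0"
proof -
  have "(a - b) * poly (Gp c xs xs' m) y = 0"
    using Gp_eval[OF fac_coeffs[OF fac], of xs xs' m] z by auto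
  then show ?thesis using ab by simp
qed

lemma existsC:
  assumes "m \<ge> 1"
  shows "\<exists>C. PropC c xs ys xs' ys' m C"
proof -
  obtain n where m: "m = Suc n" using assms by (cases m) auto
  define Z where "Z = (\<lambda>k. ys (int k)) ` {..<n} \<union> (\<lambda>k. ys' (int k)) ` {..<n}"
  have inj1: "inj_on (\<lambda>k. ys (int k)) A" for A
    unfolding inj_on_def using gp_facts(4) by (metis injD of_nat_eq_iff)
  have inj2: "inj_on (\<lambda>k. ys' (int k)) A" for A
    unfolding inj_on_def using gp_facts(5) by (metis injD of_nat_eq_iff)
  have fZ: "finite Z" by (simp add: Z_def)
  have cZ: "card Z = 2 * n"
    unfolding Z_def
    by (subst card_Un_disjoint) (auto simp: card_image[OF inj1] card_image[OF inj2] gp_facts(6))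
  have dG: "degree (Gp c xs xs' m) \<le> card Z" using Gp_deg[of c xs xs' m] cZ m by simp
  have rG: "\<forall>z\<in>Z. poly (Gp c xs xs' m) z = 0"
  proof
    fix z assume "z \<in> Z"
    then obtain k where k: "k < n" and "z = ys (int k) \<or> z = ys' (int k)" unfolding Z_def by auto
    then consider "z = ys (int k)" | "z = ys' (int k)" by blast
    then show "poly (Gp c xs xs' m) z = 0"
    proof cases
      case 1
      have ne: "xs (int k) \<noteq> xs (int k + 1)" using gp_facts(1) by (auto dest: injD)
      have "poly (Pp xs m) (xs (int k)) = 0" unfolding poly_Pp using k m
        by (subst prod_zero_iff) auto
      moreover have "poly (Pp xs m) (xs (int k + 1)) = 0" unfolding poly_Pp using k m
        by (subst prod_zero_iff) (auto intro!: bexI[of _ "Suc k"] simp: add.commute)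
      ultimately show ?thesis using Gp_root[OF _ ne] facy 1 by auto
    next
      case 2
      have ne: "xs' (int k) \<noteq> xs' (int k + 1)" using gp_facts(2) by (auto dest: injD)
      have "poly (Pp xs' m) (xs' (int k)) = 0" unfolding poly_Pp using k m
        by (subst prod_zero_iff) auto
      moreover have "poly (Pp xs' m) (xs' (int k + 1)) = 0" unfolding poly_Pp using k m
        by (subst prod_zero_iff) (auto intro!: bexI[of _ "Suc k"] simp: add.commute)
      ultimately show ?thesis using Gp_root[OF _ ne] facy' 2 by auto
    qed
  qed
  obtain L where L: "\<forall>x. poly (Gp c xs xs' m) x = L * (\<Prod>z\<in>Z. x - z)"
    using roots_factor[OF fZ dG rG] by blast
  have LZ: "poly (Gp c xs xs' m) x = L * (\<Prod>k<n. x - ys (int k)) * (\<Prod>k<n. x - ys' (int k))" for x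
    using L unfolding Z_def
    by (subst (asm) prod.union_disjoint) (auto simp: prod.reindex[OF inj1] prod.reindex[OF inj2] gp_facts(6))
  define K where "K = (\<Prod>k<m. bqX2 c (xs' (int k)))"
  have K0: "K \<noteq> 0" unfolding K_def using gp_facts(7) by simp
  show ?thesis
  proof (intro exI[of _ "L / K"], unfold PropC_def, intro allI impI)
    fix y a b
    assume Y0: "bqY2 c y \<noteq> 0" and ab: "a \<noteq> b"
      and fac: "\<forall>x. bq c x y = bqY2 c y * (x - a) * (x - b)"
      and nx: "\<forall>k<m. a \<noteq> xs' (int k) \<and> b \<noteq> xs' (int k)"
      and ny: "\<forall>k\<in>{-1..int m - 1}. y \<noteq> ys' k"
    let ?Y = "bqY2 c y"
    let ?Pa = "poly (Pp xs m) a" and ?Pb = "poly (Pp xs m) b"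
    let ?Qa = "poly (Pp xs' m) a" and ?Qb = "poly (Pp xs' m) b"
    let ?G = "poly (Gp c xs xs' m) y"
    have Qa: "?Qa \<noteq> 0" using nx unfolding poly_Pp by (subst prod_zero_iff) auto
    have Qb: "?Qb \<noteq> 0" using nx unfolding poly_Pp by (subst prod_zero_iff) auto
    have GE: "(a - b) * ?G = ?Y ^ (m - 1) * (?Pa * ?Qb - ?Pb * ?Qa)"
      by (rule Gp_eval[OF fac_coeffs[OF fac]])
    have E1: "(ratb xs xs' m a - ratb xs xs' m b) / (a - b) = ?G / (?Y ^ (m - 1) * ?Qa * ?Qb)"
    proof -
      have r: "ratb xs xs' m a = ?Pa / ?Qa" "ratb xs xs' m b = ?Pb / ?Qb"
        by (simp_all add: ratb_def poly_Pp)
      have "?G = ?Y ^ (m - 1) * (?Pa * ?Qb - ?Pb * ?Qa) / (a - b)" using GE ab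
        by (simp add: field_simps)
      then show ?thesis unfolding r using aux_frac[OF Qa Qb, of "a - b" "?Y ^ (m - 1)"] ab Y0 by simp
    qed
    define B1 where "B1 = (\<Prod>k<n. y - ys' (int k))"
    define Bm where "Bm = (\<Prod>k<m. y - ys' (int k))"
    define A where "A = (\<Prod>k<n. y - ys (int k))"
    have E2: "?Y ^ m * (?Qa * ?Qb) = K * ((y - ys' (-1)) * B1) * Bm"
    proof -
      have each: "?Y * ((a - xs' (int k)) * (b - xs' (int k)))
          = bqX2 c (xs' (int k)) * (y - ys' (int k - 1)) * (y - ys' (int k))" for k
        using facx'[of "int k" y] spec[OF fac, of "xs' (int k)"] by (simp add: algebra_simps)
      have "?Y ^ m * (?Qa * ?Qb) = (\<Prod>k<m. ?Y * ((a - xs' (int k)) * (b - xs' (int k))))"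
        unfolding poly_Pp by (simp add: prod.distrib)
      also have "\<dots> = (\<Prod>k<m. bqX2 c (xs' (int k)) * (y - ys' (int k - 1)) * (y - ys' (int k)))"
        using each by simp
      also have "\<dots> = K * (\<Prod>k<m. y - ys' (int k - 1)) * Bm"
        unfolding K_def Bm_def by (simp add: prod.distrib)
      also have "(\<Prod>k<m. y - ys' (int k - 1)) = (y - ys' (-1)) * B1"
        unfolding m B1_def by (subst prod.lessThan_Suc_shift) simp
      finally show ?thesis .
    qed
    have B1nz: "B1 \<noteq> 0" unfolding B1_def using ny m by (subst prod_zero_iff) auto
    have Bmnz: "Bm \<noteq> 0" unfolding Bm_def using ny m by (subst prod_zero_iff) auto
    have y1: "y - ys' (-1) \<noteq> 0" using ny by auto
    have "(ratb xs xs' m a - ratb xs xs' m b) / (a - b) = (?G * ?Y) / (?Y ^ m * (?Qa * ?Qb))"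
      unfolding E1 using Y0 m by (simp add: field_simps)
    also have "\<dots> = (L * A * B1 * ?Y) / (K * ((y - ys' (-1)) * B1) * Bm)"
      unfolding E2 LZ A_def B1_def by simp
    also have "\<dots> = L / K * ?Y * A / ((y - ys' (-1)) * Bm)"
      using K0 B1nz Bmnz y1 by (simp add: field_simps)
    also have "\<dots> = L / K * ?Y * (\<Prod>k\<in>{0..int m - 2}. y - ys k) / (\<Prod>k\<in>{-1..int m - 1}. y - ys' k)"
      unfolding prod_int1[OF assms] prod_int2 A_def Bm_def m by (simp add: prod_int_interval)
    finally show "(ratb xs xs' m a - ratb xs xs' m b) / (a - b) = L / K * ?Y * (\<Prod>k\<in>{0..int m - 2}. y - ys k) / (\<Prod>k\<in>{-1..int m - 1}. y - ys' k)" .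
  qed
qed


lemma uniqC:
  assumes "m \<ge> 1" "PropC c xs ys xs' ys' m C1" "PropC c xs ys xs' ys' m C2"
  shows "C1 = C2"
proof -
  obtain n where m: "m = Suc n" using assms by (cases m) auto
  let ?y = "ys (int n)" and ?a = "xs (int n)" and ?b = "xs (int n + 1)"
  have h1: "bqY2 c ?y \<noteq> 0" by (rule gp_facts(8))
  have h2: "?a \<noteq> ?b" using gp_facts(1) by (auto dest: injD)
  have h3: "\<forall>x. bq c x ?y = bqY2 c ?y * (x - ?a) * (x - ?b)" using facy by blast
  have h4: "\<forall>k<m. ?a \<noteq> xs' (int k) \<and> ?b \<noteq> xs' (int k)" using gp_facts(3) by blast
  have h5: "\<forall>k\<in>{-1..int m - 1}. ?y \<noteq> ys' k" using gp_facts(6) by blast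
  let ?R = "bqY2 c ?y * (\<Prod>k\<in>{0..int m - 2}. ?y - ys k) / (\<Prod>k\<in>{-1..int m - 1}. ?y - ys' k)"
  have e1: "(ratb xs xs' m ?a - ratb xs xs' m ?b) / (?a - ?b) = C1 * ?R"
    using assms(2) h1 h2 h3 h4 h5 unfolding PropC_def by (simp add: mult.assoc)
  have e2: "(ratb xs xs' m ?a - ratb xs xs' m ?b) / (?a - ?b) = C2 * ?R"
    using assms(3) h1 h2 h3 h4 h5 unfolding PropC_def by (simp add: mult.assoc)
  have n1: "(\<Prod>k\<in>{0..int m - 2}. ?y - ys k) \<noteq> 0"
    unfolding prod_int1[OF assms(1)] using gp_facts(4) m by (subst prod_zero_iff) (auto dest: injD)
  have n2: "(\<Prod>k\<in>{-1..int m - 1}. ?y - ys' k) \<noteq> 0"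
    using gp_facts(6) by (subst prod_zero_iff) auto
  have "?R \<noteq> 0" using h1 n1 n2 by simp
  then show ?thesis using e1 e2 by simp
qed

lemma C_prop:
  assumes "m \<ge> 1"
  shows "PropC c xs ys xs' ys' m (C_const c xs ys xs' ys' m)"
proof -
  have "\<exists>!C. PropC c xs ys xs' ys' m C" using existsC[OF assms] uniqC[OF assms] by blast
  then show ?thesis unfolding C_const_alt by (rule theI')
qed

lemma Dr:
  assumes "m \<ge> 1"
  shows "(ratb xs xs' m (xs n) - ratb xs xs' m (xs (n + 1))) / (xs n - xs (n + 1)) =
          C_const c xs ys xs' ys' m * bqY2 c (ys n) * (\<Prod>k\<in>{0..int m - 2}. ys n - ys k)
            / (\<Prod>k\<in>{-1..int m - 1}. ys n - ys' k)"
proof -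
  have h2: "xs n \<noteq> xs (n + 1)" using gp_facts(1) by (auto dest: injD)
  show ?thesis using C_prop[OF assms] gp_facts(8)[of n] h2 facy gp_facts(3) gp_facts(6)
    unfolding PropC_def by blast
qed

end


lemma aux_dq:
  fixes p q a b R :: complex
  shows "(p - q) / (a - b) = R \<Longrightarrow> b - a \<noteq> 0 \<Longrightarrow> q - p = (b - a) * R"
  by (auto simp: field_simps)

lemma aux_tel:
  fixes A P y yj yj' w :: complex
  assumes "P \<noteq> 0" "y - yj' \<noteq> 0" "y - w \<noteq> 0"
  shows "A / ((y - w) * P) - A * (y - yj) / ((y - w) * (P * (y - yj'))) = (yj - yj') * A / ((y - w) * (P * (y - yj')))"
proof -
  define D where "D = (y - w) * P"
  have D: "D \<noteq> 0" using assms by (simp add: D_def)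
  have "A / ((y - w) * P) - A * (y - yj) / ((y - w) * (P * (y - yj'))) = A / D - A * (y - yj) / (D * (y - yj'))"
    by (simp add: D_def mult.assoc)
  also have "\<dots> = (A * (y - yj') - A * (y - yj)) / (D * (y - yj'))"
    using D assms(2) by (simp add: divide_simps)
  also have "\<dots> = (yj - yj') * A / ((y - w) * (P * (y - yj')))"
    by (simp add: D_def mult.assoc algebra_simps)
  finally show ?thesis .
qed

lemma telesc: "(\<Sum>j\<le>n. (u j - u (Suc j)) :: complex) = u 0 - u (Suc n)"
  by (induction n) auto

lemma ratb_zero: "n < m \<Longrightarrow> ratb xs xs' m (xs (int n)) = 0"
  unfolding ratb_def by (auto simp: prod_zero_iff)

theorem mainTheorem9:
  fixes c :: "nat \<Rightarrow> nat \<Rightarrow> complex"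
    and xs ys xs' ys' :: "int \<Rightarrow> complex"
    and f :: "complex \<Rightarrow> complex"
  assumes ell: "elliptic_seq c xs ys"
    and ell': "elliptic_seq c xs' ys'"
    and gp: "general_position c xs ys xs' ys'"
    and Df: "\<And>n::nat. (f (xs (int n + 1)) - f (xs (int n))) / (xs (int n + 1) - xs (int n))
                = bqY2 c (ys (int n)) / (ys (int n) - ys' (-1))"
    and Cnz: "\<And>m::nat. m \<ge> 1 \<Longrightarrow> C_const c xs ys xs' ys' m \<noteq> 0"
  shows "\<forall>N::nat. \<forall>n\<le>N.
           (\<Sum>m\<le>N. (if m = 0 then f (xs 0)
                      else (ys (int m - 1) - ys' (int m - 1)) / C_const c xs ys xs' ys' m)
                     * ratb xs xs' m (xs (int n)))
           = f (xs (int n))"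
proof -
  define cm where "cm m = (if m = 0 then f (xs 0)
                      else (ys (int m - 1) - ys' (int m - 1)) / C_const c xs ys xs' ys' m)" for m
  define S where "S N x = (\<Sum>m\<le>N. cm m * ratb xs xs' m x)" for N x
  have red: "S N (xs (int n)) = S n (xs (int n))" if "n \<le> N" for n N
    unfolding S_def
    by (rule sum.mono_neutral_right) (use that in \<open>auto simp: ratb_zero\<close>)
  note gpf = gp_facts[OF ell ell' gp]
  have main: "S n (xs (int n)) = f (xs (int n))" for n
  proof (induction n)
    case 0 then show ?case by (simp add: S_def cm_def ratb_def)
  next
    case (Suc n)
    let ?y = "ys (int n)" and ?a = "xs (int n)" and ?b = "xs (int n + 1)"
    let ?Y = "bqY2 c ?y"
    have ab: "?b - ?a \<noteq> 0" using gpf(1) by (auto dest: injD)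
    have yy: "?y \<noteq> ys' k" for k using gpf(6) by blast
    define u where "u j = (\<Prod>k<j. ?y - ys (int k)) / ((?y - ys' (-1)) * (\<Prod>k<j. ?y - ys' (int k)))" for j
    have trm: "cm (Suc j) * (ratb xs xs' (Suc j) ?b - ratb xs xs' (Suc j) ?a)
        = (?b - ?a) * ?Y * (u j - u (Suc j))" for j
    proof -
      have C0: "C_const c xs ys xs' ys' (Suc j) \<noteq> 0" using Cnz by simp
      have D: "ratb xs xs' (Suc j) ?b - ratb xs xs' (Suc j) ?a
         = (?b - ?a) * (C_const c xs ys xs' ys' (Suc j) * ?Y * (\<Prod>k<j. ?y - ys (int k))
            / ((?y - ys' (-1)) * (\<Prod>k<Suc j. ?y - ys' (int k))))"
      proof -
        have "(ratb xs xs' (Suc j) ?a - ratb xs xs' (Suc j) ?b) / (?a - ?b) =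
          C_const c xs ys xs' ys' (Suc j) * ?Y * (\<Prod>k\<in>{0..int (Suc j) - 2}. ?y - ys k)
            / (\<Prod>k\<in>{-1..int (Suc j) - 1}. ?y - ys' k)"
          by (rule Dr[OF ell ell' gp]) simp
        also have "\<dots> = C_const c xs ys xs' ys' (Suc j) * ?Y * (\<Prod>k<j. ?y - ys (int k))
            / ((?y - ys' (-1)) * (\<Prod>k<Suc j. ?y - ys' (int k)))"
          by (subst prod_int1, simp, subst prod_int2, simp)
        finally show ?thesis using ab by (rule aux_dq)
      qed
      have U: "u j - u (Suc j) = (ys (int j) - ys' (int j)) * (\<Prod>k<j. ?y - ys (int k))
            / ((?y - ys' (-1)) * (\<Prod>k<Suc j. ?y - ys' (int k)))"
      proof -
        have nz: "(\<Prod>k<j. ?y - ys' (int k)) \<noteq> 0" "?y - ys' (int j) \<noteq> 0" "?y - ys' (-1) \<noteq> 0"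
          using yy by (auto simp: prod_zero_iff)
        have "u (Suc j) = (\<Prod>k<j. ?y - ys (int k)) * (?y - ys (int j)) /
            ((?y - ys' (-1)) * ((\<Prod>k<j. ?y - ys' (int k)) * (?y - ys' (int j))))"
          by (simp add: u_def)
        moreover have "u j = (\<Prod>k<j. ?y - ys (int k)) / ((?y - ys' (-1)) * (\<Prod>k<j. ?y - ys' (int k)))"
          by (simp add: u_def)
        ultimately show ?thesis using aux_tel[OF nz] by simp
      qed
      show ?thesis unfolding D U cm_def using C0 by simp
    qed
    have "S (Suc n) ?b - S (Suc n) ?a = (\<Sum>m\<le>Suc n. cm m * (ratb xs xs' m ?b - ratb xs xs' m ?a))"
      by (simp add: S_def algebra_simps sum_subtractf)
    also have "\<dots> = (\<Sum>j\<le>n. cm (Suc j) * (ratb xs xs' (Suc j) ?b - ratb xs xs' (Suc j) ?a))"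
      by (subst sum.atMost_Suc_shift) (simp add: ratb_def)
    also have "\<dots> = (?b - ?a) * ?Y * (\<Sum>j\<le>n. u j - u (Suc j))"
      by (simp add: trm sum_distrib_left)
    also have "\<dots> = (?b - ?a) * ?Y * (u 0 - u (Suc n))" by (simp add: telesc)
    also have "u (Suc n) = 0" by (simp add: u_def)
    also have "u 0 = 1 / (?y - ys' (-1))" by (simp add: u_def)
    also have "(?b - ?a) * ?Y * (1 / (?y - ys' (-1)) - 0) = f ?b - f ?a"
      using Df[of n] ab by (simp add: field_simps)
    finally have "S (Suc n) ?b - S (Suc n) ?a = f ?b - f ?a" .
    moreover have "S (Suc n) ?a = f ?a" using red[of n "Suc n"] Suc.IH by simp
    ultimately show ?case by (simp add: add.commute)
  qed
  show ?thesis
  proof (intro allI impI)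
    fix N n :: nat assume "n \<le> N"
    then show "(\<Sum>m\<le>N. (if m = 0 then f (xs 0)
                      else (ys (int m - 1) - ys' (int m - 1)) / C_const c xs ys xs' ys' m)
                     * ratb xs xs' m (xs (int n))) = f (xs (int n))"
      using red[of n N] main[of n] unfolding S_def cm_def by simp
  qed
qed

end
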